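(* Suppose $R=0$ and $f$ satisfies the Polyak–Łojasiewicz condition with constant $\mu>0$: $\|\nabla f(x)\|^2\ge2\mu(f(x)-f^\star)$ for all $x\in\mathbb{R}^d$, where $f^\star=f(x^\star)$ for a minimizer $x^\star$ of $f$. In EF-BV, suppose $\nu\in(0,1]$, $\lambda\in(0,1]$ is such that $r<1$, and $$0<\gamma\le\frac{1}{L+\tilde L\sqrt{\frac{r_{\mathrm{av}}}{r}}\frac{1}{s^\star}}.$$ For $t\ge0$ define $\Psi^t=f(x^t)-f^\star+\frac{\gamma}{2\theta^\star}\frac1n\sum_{i=1}^n\|\nabla f_i(x^t)-h_i^t\|^2$. Then for every $t\ge0$, $$\mathbb{E}[\Psi^t]\le\Big(\max\Big(1-\gamma\mu,\frac{r+1}{2}\Big)\Big)^t\Psi^0.$$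
   Context: Problem setting: $f=\frac1n\sum_{i=1}^nf_i$, where each $f_i:\mathbb{R}^d\to\mathbb{R}$ is convex and $L_i$-smooth (differentiable with $L_i$-Lipschitz gradient); $\tilde L=\sqrt{\frac1n\sum_iL_i^2}$ and $f$ is $L$-smooth with $L\le\tilde L$; $R:\mathbb{R}^d\to\mathbb{R}\cup\{+\infty\}$ is proper closed convex, $\mathrm{prox}_{\gamma R}(x)=\arg\min_y(\gamma R(y)+\frac12\|x-y\|^2)$, and a minimizer of $f+R$ exists. For $\eta\in[0,1)$, $\omega\ge0$, $\mathbb{C}(\eta,\omega)$ is the class of randomized operators $\mathcal{C}:\mathbb{R}^d\to\mathbb{R}^d$ with $\|\mathbb{E}[\mathcal{C}(x)]-x\|\le\eta\|x\|$ and $\mathbb{E}\|\mathcal{C}(x)-\mathbb{E}[\mathcal{C}(x)]\|^2\le\omega\|x\|^2$ for all $x$. Compressors $\mathcal{C}_i^t$ ($i=1,\dots,n$, $t\ge0$) all lie in $\mathbb{C}(\eta,\omega)$; those used at iteration $t$ are independent of all randomness of previous iterations; $\omega_{\mathrm{av}}\in[0,\omega]$ satisfies, for every $t$ and all $x_1,\dots,x_n$, $\mathbb{E}\|\frac1n\sum_i(\mathcal{C}_i^t(x_i)-\mathbb{E}[\mathcal{C}_i^t(x_i)])\|^2\le\frac{\omega_{\mathrm{av}}}{n}\sum_i\|x_i\|^2$. Algorithm EF-BV: given $x^0,h_1^0,\dots,h_n^0$, $\gamma>0$, $\lambda,\nu\in(0,1]$, $h^0=\frac1n\sum_ih_i^0$;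 for $t\ge0$: $d_i^t=\mathcal{C}_i^t(\nabla f_i(x^t)-h_i^t)$, $h_i^{t+1}=h_i^t+\lambda d_i^t$, $d^t=\frac1n\sum_id_i^t$, $h^{t+1}=h^t+\lambda d^t$, $g^{t+1}=h^t+\nu d^t$, $x^{t+1}=\mathrm{prox}_{\gamma R}(x^t-\gamma g^{t+1})$. Constants: $r=(1-\lambda+\lambda\eta)^2+\lambda^2\omega$, $r_{\mathrm{av}}=(1-\nu+\nu\eta)^2+\nu^2\omega_{\mathrm{av}}$, $s^\star=\sqrt{\frac{1+r}{2r}}-1$, $\theta^\star=s^\star(1+s^\star)\frac{r}{r_{\mathrm{av}}}$ (with $r>0$ and $r_{\mathrm{av}}>0$ so these are finite and positive). *)

theory Defs
  imports "HOL-Probability.Probability"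
begin

text \<open>Constants of EF-BV. r = efbv_r lam eta om, r_av = efbv_r nu eta om_av.\<close>
definition efbv_r :: "real \<Rightarrow> real \<Rightarrow> real \<Rightarrow> real" where
  "efbv_r a eta om = (1 - a + a * eta)^2 + a^2 * om"

definition s_star :: "real \<Rightarrow> real" where
  "s_star r = sqrt ((1 + r) / (2 * r)) - 1"

definition theta_star :: "real \<Rightarrow> real \<Rightarrow> real" where
  "theta_star r rav = s_star r * (1 + s_star r) * r / rav"

text \<open>EF-BV with R = 0 (so prox is the identity). The state at time t is
  (x^t, (h_i^t)_i, h^t). Cr t i is the realisation of the compressor C_i^t.\<close>
fun efbv :: "nat \<Rightarrow> real \<Rightarrow> real \<Rightarrow> real \<Rightarrow> (nat \<Rightarrow> 'a \<Rightarrow> 'a::real_vector)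
    \<Rightarrow> (nat \<Rightarrow> nat \<Rightarrow> 'a \<Rightarrow> 'a) \<Rightarrow> 'a \<Rightarrow> (nat \<Rightarrow> 'a) \<Rightarrow> nat
    \<Rightarrow> 'a \<times> (nat \<Rightarrow> 'a) \<times> 'a" where
  "efbv n gamma lam nu grad Cr x0 h0 0 = (x0, h0, (1 / real n) *\<^sub>R (\<Sum>i<n. h0 i))"
| "efbv n gamma lam nu grad Cr x0 h0 (Suc t) =
     (case efbv n gamma lam nu grad Cr x0 h0 t of (x, h, hb) \<Rightarrow>
       let d = (\<lambda>i. Cr t i (grad i x - h i));
           db = (1 / real n) *\<^sub>R (\<Sum>i<n. d i);
           g = hb + nu *\<^sub>R db
       in (x - gamma *\<^sub>R g, (\<lambda>i. h i + lam *\<^sub>R d i), hb + lam *\<^sub>R db))"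

definition efbv_lyap :: "nat \<Rightarrow> (nat \<Rightarrow> 'a::real_normed_vector \<Rightarrow> real) \<Rightarrow> (nat \<Rightarrow> 'a \<Rightarrow> 'a)
    \<Rightarrow> real \<Rightarrow> real \<Rightarrow> 'a \<Rightarrow> 'a \<times> (nat \<Rightarrow> 'a) \<times> 'a \<Rightarrow> real" where
  "efbv_lyap n fs grad gamma theta xstar st = (case st of (x, h, hb) \<Rightarrow>
     (1 / real n) * (\<Sum>i<n. fs i x) - (1 / real n) * (\<Sum>i<n. fs i xstar)
     + gamma / (2 * theta) * ((1 / real n) * (\<Sum>i<n. (norm (grad i x - h i))^2)))"

end

theory Submission
  imports Defs
begin


lemma young_sq:
  fixes a b :: "'a::real_inner"
  assumes s: "s > 0"
  shows "(norm (a + b))^2 \<le> (1 + 1/s) * (norm a)^2 + (1 + s) * (norm b)^2"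
proof -
  have "(norm (a + b))^2 = (norm a)^2 + 2 * (a \<bullet> b) + (norm b)^2"
    by (simp add: power2_norm_eq_inner inner_add_left inner_add_right inner_commute)
  also have "a \<bullet> b \<le> norm a * norm b" by (rule norm_cauchy_schwarz)
  hence "2 * (a \<bullet> b) \<le> (norm a)^2 / s + s * (norm b)^2"
  proof -
    have "0 \<le> (norm a / sqrt s - sqrt s * norm b)^2" by simp
    also have "\<dots> = (norm a)^2 / s - 2 * norm a * norm b + s * (norm b)^2"
      using s by (simp add: power2_diff power_divide power_mult_distrib)
    finally show ?thesis using \<open>a \<bullet> b \<le> norm a * norm b\<close> by linarith
  qed
  hence "(norm a)^2 + 2 * (a \<bullet> b) + (norm b)^2 \<le> (1 + 1/s) * (norm a)^2 + (1 + s) * (norm b)^2"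
    by (simp add: algebra_simps)
  finally show ?thesis .
qed

lemma coef_aux: "\<lbrakk>(0::real) < s; 0 < k; 0 < r; 0 < rav\<rbrakk> \<Longrightarrow> gamma / (2 * (s * k * r / rav)) * ((k / s) * Lt^2) = gamma / 2 * (Lt^2 * (rav / r) / s^2)"
  by (simp add: field_simps power2_eq_square)

lemma arith_aux:
  fixes cX gamma a N nd p gg Fx Fs L c Y :: real
  assumes "cX = gamma / 2 * a^2 * gamma^2 * N" and "nd = N - 2 * p + gg"
  shows "Fx - gamma * p + L / 2 * gamma^2 * N - Fs + (cX + c * Y)
     = (Fx - Fs - gamma / 2 * gg + gamma / 2 * nd + c * Y) - gamma / 2 * N * (1 - L * gamma - a^2 * gamma^2)"
  unfolding assms by (simp add: field_simps power2_eq_square)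

lemma avg_norm_sq:
  fixes a :: "nat \<Rightarrow> 'a::real_normed_vector"
  assumes "n \<ge> 1"
  shows "(norm ((1 / real n) *\<^sub>R (\<Sum>i<n. a i)))^2 \<le> (1 / real n) * (\<Sum>i<n. (norm (a i))^2)"
proof -
  have "norm ((1 / real n) *\<^sub>R (\<Sum>i<n. a i)) \<le> (1 / real n) * (\<Sum>i<n. norm (a i))"
    using norm_sum[of a "{..<n}"] by (simp add: divide_right_mono)
  hence "(norm ((1 / real n) *\<^sub>R (\<Sum>i<n. a i)))^2 \<le> ((1 / real n) * (\<Sum>i<n. norm (a i)))^2"
    by (intro power_mono) auto
  also have "\<dots> = (1 / real n)^2 * (\<Sum>i<n. norm (a i))^2" by (rule power_mult_distrib)
  also have "\<dots> \<le> (1 / real n)^2 * ((\<Sum>i<n. (norm (a i))^2) * real n)"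
    using sum_squared_le_sum_of_squares[of "\<lambda>i. norm (a i)" "{..<n}"]
    by (intro mult_left_mono) auto
  also have "\<dots> = (1 / real n) * (\<Sum>i<n. (norm (a i))^2)"
    using assms by (simp add: power2_eq_square)
  finally show ?thesis .
qed

lemma descent:
  fixes F :: "'a::real_inner \<Rightarrow> real"
  assumes d: "\<And>x. (F has_derivative (\<lambda>v. G x \<bullet> v)) (at x)"
    and lip: "\<And>x y. norm (G x - G y) \<le> L * norm (x - y)"
  shows "F y \<le> F x + G x \<bullet> (y - x) + L / 2 * (norm (y - x))^2"
proof -
  define v where "v = y - x"
  define \<psi> where "\<psi> = (\<lambda>t. F (x + t *\<^sub>R v) - t * (G x \<bullet> v) - L / 2 * t^2 * (norm v)^2)"
  have "\<psi> 1 \<le> \<psi> 0"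
  proof (rule DERIV_nonpos_imp_nonincreasing[of 0 1 \<psi>])
    fix t :: real assume t: "0 \<le> t" "t \<le> 1"
    have d1: "((\<lambda>t. F (x + t *\<^sub>R v)) has_derivative (\<lambda>h. G (x + t *\<^sub>R v) \<bullet> (h *\<^sub>R v))) (at t)"
      by (rule has_derivative_compose[OF _ d, where f'="\<lambda>h. h *\<^sub>R v"]) (auto intro!: derivative_eq_intros)
    hence "((\<lambda>t. F (x + t *\<^sub>R v)) has_real_derivative (G (x + t *\<^sub>R v) \<bullet> v)) (at t)"
      unfolding has_field_derivative_def by (rule has_derivative_eq_rhs) (auto simp: fun_eq_iff)
    hence "(\<psi> has_real_derivative (G (x + t *\<^sub>R v) \<bullet> v - G x \<bullet> v - L / 2 * (2 * t) * (norm v)^2)) (at t)"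
      unfolding \<psi>_def by (auto intro!: derivative_eq_intros)
    moreover have "G (x + t *\<^sub>R v) \<bullet> v - G x \<bullet> v - L / 2 * (2 * t) * (norm v)^2 \<le> 0"
    proof -
      have "G (x + t *\<^sub>R v) \<bullet> v - G x \<bullet> v = (G (x + t *\<^sub>R v) - G x) \<bullet> v" by (simp add: inner_diff_left)
      also have "\<dots> \<le> norm (G (x + t *\<^sub>R v) - G x) * norm v" by (rule norm_cauchy_schwarz)
      also have "\<dots> \<le> (L * norm (t *\<^sub>R v)) * norm v"
        using lip[of "x + t *\<^sub>R v" x] by (intro mult_right_mono) auto
      also have "\<dots> = L * t * (norm v)^2" using t by (simp add: power2_eq_square)
      finally show ?thesis by simp
    qed
    ultimately show "\<exists>y. DERIV \<psi> t :> y \<and> y \<le> 0" by blast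
  qed simp
  thus ?thesis unfolding \<psi>_def v_def by simp
qed



lemma var_decomp:
  fixes D :: "'w \<Rightarrow> 'a::euclidean_space"
  assumes P: "prob_space M" and iD: "integrable M D"
    and iV: "integrable M (\<lambda>w. (norm (D w - m))^2)" and m: "m = (\<integral>w. D w \<partial>M)"
  shows "integrable M (\<lambda>w. (norm (a + c *\<^sub>R (D w - m)))^2)"
    and "(\<integral>w. (norm (a + c *\<^sub>R (D w - m)))^2 \<partial>M) = (norm a)^2 + c^2 * (\<integral>w. (norm (D w - m))^2 \<partial>M)"
proof -
  interpret prob_space M by (rule P)
  have eq0: "\<And>y. (norm (a + c *\<^sub>R y))^2 = (norm a)^2 + 2 * c * (a \<bullet> y) + c^2 * (norm y)^2"
    unfolding power2_norm_eq_inner by (simp add: inner_add_left inner_add_right inner_commute algebra_simps power2_eq_square)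
  have eq: "\<And>w. (norm (a + c *\<^sub>R (D w - m)))^2 = (norm a)^2 + 2 * c * (a \<bullet> (D w - m)) + c^2 * (norm (D w - m))^2"
    by (rule eq0)
  have iDm: "integrable M (\<lambda>w. D w - m)" using iD by auto
  have i1: "integrable M (\<lambda>w. a \<bullet> (D w - m))" using iDm by auto
  have z: "(\<integral>w. a \<bullet> (D w - m) \<partial>M) = 0"
  proof -
    have "(\<integral>w. a \<bullet> (D w - m) \<partial>M) = a \<bullet> (\<integral>w. D w - m \<partial>M)" using iDm by simp
    also have "(\<integral>w. D w - m \<partial>M) = 0" using iD m by (simp add: Bochner_Integration.integral_diff prob_space)
    finally show ?thesis by simp
  qed
  show "integrable M (\<lambda>w. (norm (a + c *\<^sub>R (D w - m)))^2)"
    unfolding eq using i1 iV by auto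
  have "(\<integral>w. (norm (a + c *\<^sub>R (D w - m)))^2 \<partial>M) =
     (\<integral>w. (norm a)^2 + 2 * c * (a \<bullet> (D w - m)) + c^2 * (norm (D w - m))^2 \<partial>M)"
    unfolding eq ..
  also have "\<dots> = (norm a)^2 + 2 * c * (\<integral>w. a \<bullet> (D w - m) \<partial>M) + c^2 * (\<integral>w. (norm (D w - m))^2 \<partial>M)"
    using i1 iV by (simp add: Bochner_Integration.integral_add prob_space)
  finally show "(\<integral>w. (norm (a + c *\<^sub>R (D w - m)))^2 \<partial>M) = (norm a)^2 + c^2 * (\<integral>w. (norm (D w - m))^2 \<partial>M)"
    using z by simp
qed



definition stepf :: "nat \<Rightarrow> real \<Rightarrow> real \<Rightarrow> real \<Rightarrow> (nat \<Rightarrow> 'a \<Rightarrow> 'a::real_vector)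
    \<Rightarrow> (nat \<Rightarrow> 'a \<Rightarrow> 'a) \<Rightarrow> 'a \<times> (nat \<Rightarrow> 'a) \<times> 'a \<Rightarrow> 'a \<times> (nat \<Rightarrow> 'a) \<times> 'a" where
  "stepf n gamma lam nu grad D st = (case st of (x, h, hb) \<Rightarrow>
       let d = (\<lambda>i. D i (grad i x - h i));
           db = (1 / real n) *\<^sub>R (\<Sum>i<n. d i);
           g = hb + nu *\<^sub>R db
       in (x - gamma *\<^sub>R g, (\<lambda>i. h i + lam *\<^sub>R d i), hb + lam *\<^sub>R db))"

lemma efbv_Suc': "efbv n gamma lam nu grad Cr x0 h0 (Suc t) =
   stepf n gamma lam nu grad (Cr t) (efbv n gamma lam nu grad Cr x0 h0 t)"
  by (simp add: stepf_def)

lemma one_step: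
  fixes n :: nat
    and fs :: "nat \<Rightarrow> 'a::euclidean_space \<Rightarrow> real"
    and grad :: "nat \<Rightarrow> 'a \<Rightarrow> 'a"
    and Ls :: "nat \<Rightarrow> real" and L :: real and mu :: real
    and xstar :: 'a
    and M :: "'w measure"
    and Dw :: "'w \<Rightarrow> nat \<Rightarrow> 'a \<Rightarrow> 'a"
    and eta om om_av gamma lam nu :: real
    and x :: 'a and h :: "nat \<Rightarrow> 'a"
  defines "F \<equiv> (\<lambda>x. (1 / real n) * (\<Sum>i<n. fs i x))"
    and "gradF \<equiv> (\<lambda>x. (1 / real n) *\<^sub>R (\<Sum>i<n. grad i x))"
    and "Lt \<equiv> sqrt ((1 / real n) * (\<Sum>i<n. (Ls i)^2))"
    and "r \<equiv> efbv_r lam eta om"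
    and "rav \<equiv> efbv_r nu eta om_av"
    and "ED \<equiv> (\<lambda>i v. \<integral>w. Dw w i v \<partial>M)"
  assumes n_pos: "n \<ge> 1"
    and deriv: "\<And>i x. i < n \<Longrightarrow> (fs i has_derivative (\<lambda>v. grad i x \<bullet> v)) (at x)"
    and smooth_i: "\<And>i x y. i < n \<Longrightarrow> norm (grad i x - grad i y) \<le> Ls i * norm (x - y)"
    and smooth_f: "\<And>x y. norm (gradF x - gradF y) \<le> L * norm (x - y)"
    and xstar_min: "\<And>x. F xstar \<le> F x"
    and PL: "\<And>x. (norm (gradF x))^2 \<ge> 2 * mu * (F x - F xstar)"
    and prob: "prob_space M"
    and eta_range: "0 \<le> eta" "eta < 1"
    and om_nonneg: "0 \<le> om"
    and D_int: "\<And>i v. i < n \<Longrightarrow> integrable M (\<lambda>w. Dw w i v)"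
    and D_bias: "\<And>i v. i < n \<Longrightarrow> norm (ED i v - v) \<le> eta * norm v"
    and D_var_int: "\<And>i v. i < n \<Longrightarrow> integrable M (\<lambda>w. (norm (Dw w i v - ED i v))^2)"
    and D_var: "\<And>i v. i < n \<Longrightarrow> (\<integral>w. (norm (Dw w i v - ED i v))^2 \<partial>M) \<le> om * (norm v)^2"
    and om_av_range: "0 \<le> om_av"
    and D_av: "\<And>(xs :: nat \<Rightarrow> 'a).
                 (\<integral>w. (norm ((1 / real n) *\<^sub>R (\<Sum>i<n. Dw w i (xs i) - ED i (xs i))))^2 \<partial>M)
                   \<le> om_av / real n * (\<Sum>i<n. (norm (xs i))^2)"
    and r_pos: "r > 0" and rav_pos: "rav > 0"
    and nu_range: "0 < nu" "nu \<le> 1"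
    and lam_range: "0 < lam" "lam \<le> 1"
    and r_lt1: "r < 1"
    and gamma_pos: "0 < gamma"
    and gamma_le: "gamma \<le> 1 / (L + Lt * sqrt (rav / r) * (1 / s_star r))"
  shows "(\<integral>\<^sup>+w. ennreal (efbv_lyap n fs grad gamma (theta_star r rav) xstar
            (stepf n gamma lam nu grad (Dw w) (x, h, (1 / real n) *\<^sub>R (\<Sum>i<n. h i)))) \<partial>M)
         \<le> ennreal (max (1 - gamma * mu) ((r + 1) / 2) *
              efbv_lyap n fs grad gamma (theta_star r rav) xstar (x, h, (1 / real n) *\<^sub>R (\<Sum>i<n. h i)))"
proof -
  interpret P: prob_space M by (rule prob)
  define s where "s = s_star r"
  define \<theta> where "\<theta> = theta_star r rav"
  define c where "c = gamma / (2 * \<theta>)"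
  define \<rho> where "\<rho> = max (1 - gamma * mu) ((r + 1) / 2)"
  have n_gt: "real n > 0" using n_pos by simp
  have s1: "1 + s = sqrt ((1 + r) / (2 * r))" unfolding s_def s_star_def by simp
  have "1 < (1 + r) / (2 * r)" using r_pos r_lt1 by (simp add: field_simps)
  hence "1 < sqrt ((1 + r) / (2 * r))" by (metis real_sqrt_one real_sqrt_less_iff)
  hence s_pos: "s > 0" using s1 by linarith
  have s_sq: "(1 + s)^2 = (1 + r) / (2 * r)" unfolding s1 using r_pos by simp
  have th_def': "\<theta> = s * (1 + s) * r / rav" unfolding \<theta>_def theta_star_def s_def ..
  have th_pos: "\<theta> > 0" unfolding th_def' using s_pos r_pos rav_pos by simp
  have th_rav: "\<theta> * rav = s * (1 + s) * r" unfolding th_def' using rav_pos by simp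
  have c_pos: "c > 0" unfolding c_def using gamma_pos th_pos by simp
  obtain b :: 'a where b: "b \<in> Basis" using nonempty_Basis by blast
  have L_nn: "L \<ge> 0"
  proof -
    have "0 \<le> norm (gradF b - gradF 0)" by simp
    also have "\<dots> \<le> L * norm (b - 0)" by (rule smooth_f)
    finally show ?thesis using b by simp
  qed
  define a where "a = Lt * sqrt (rav / r) * (1 / s)"
  have Lt_nn: "Lt \<ge> 0" unfolding Lt_def by (intro real_sqrt_ge_zero mult_nonneg_nonneg sum_nonneg) auto
  have a_nn: "a \<ge> 0" unfolding a_def using Lt_nn s_pos r_pos rav_pos by simp
  have gle: "gamma \<le> 1 / (L + a)" using gamma_le unfolding a_def s_def by simp
  have La_pos: "L + a > 0"
  proof (rule ccontr)
    assume "\<not> L + a > 0"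
    hence "1 / (L + a) \<le> 0" by simp
    thus False using gle gamma_pos by linarith
  qed
  have gLa: "gamma * (L + a) \<le> 1"
    using gle La_pos by (simp add: field_simps)
  have key: "L * gamma + a^2 * gamma^2 \<le> 1"
  proof -
    have ag: "a * gamma \<le> 1" using gLa L_nn gamma_pos by (simp add: algebra_simps) (smt (verit) mult_nonneg_nonneg)
    have "a^2 * gamma^2 = (a * gamma) * (a * gamma)" by (simp add: power2_eq_square)
    also have "\<dots> \<le> a * gamma" using ag a_nn gamma_pos by (simp add: mult_left_le)
    finally show ?thesis using gLa by (simp add: algebra_simps)
  qed
  have Lt2: "Lt^2 = (1 / real n) * (\<Sum>i<n. (Ls i)^2)"
    unfolding Lt_def by (intro real_sqrt_pow2 mult_nonneg_nonneg sum_nonneg) auto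
  have coef: "c * ((1 + 1 / s) * Lt^2) = gamma / 2 * a^2"
  proof -
    have "a^2 = Lt^2 * (rav / r) / s^2" unfolding a_def using rav_pos r_pos
      by (simp add: power_mult_distrib power_divide)
    moreover have "c * ((1 + 1 / s) * Lt^2) = gamma / 2 * (Lt^2 * (rav / r) / s^2)"
    proof -
      have "1 + 1/s = (1+s)/s" using s_pos by (simp add: field_simps)
      thus ?thesis unfolding c_def th_def' using coef_aux[of s "1+s" r rav gamma Lt] s_pos r_pos rav_pos by simp
    qed
    ultimately show ?thesis by simp
  qed
  define hb where "hb = (1 / real n) *\<^sub>R (\<Sum>i<n. h i)"
  define v where "v = (\<lambda>i. grad i x - h i)"
  define Dx where "Dx = (\<lambda>i w. Dw w i (v i))"
  define E where "E = (\<lambda>i. ED i (v i))"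
  define g where "g = (\<lambda>w. hb + nu *\<^sub>R ((1 / real n) *\<^sub>R (\<Sum>i<n. Dx i w)))"
  define x' where "x' = (\<lambda>w. x - gamma *\<^sub>R g w)"
  define G where "G = (1 / real n) * (\<Sum>i<n. (norm (v i))^2)"
  define S where "S = (\<lambda>w. (1 / real n) * (\<Sum>i<n. (norm (v i - lam *\<^sub>R Dx i w))^2))"
  define gF where "gF = gradF x"
  define Q where "Q = (\<lambda>w. F x - F xstar - gamma / 2 * (norm gF)^2 + gamma / 2 * (norm (g w - gF))^2
                        + c * (1 + s) * S w)"
  have Psi0: "efbv_lyap n fs grad gamma \<theta> xstar (x, h, hb) = F x - F xstar + c * G"
    unfolding efbv_lyap_def F_def c_def G_def v_def by simp
  have Psi1: "efbv_lyap n fs grad gamma \<theta> xstar (stepf n gamma lam nu grad (Dw w) (x, h, hb)) =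
      F (x' w) - F xstar + c * ((1 / real n) * (\<Sum>i<n. (norm (grad i (x' w) - (h i + lam *\<^sub>R Dx i w)))^2))" for w
    unfolding efbv_lyap_def F_def c_def stepf_def x'_def g_def Dx_def v_def by (simp add: Let_def)
  have dF: "(F has_derivative (\<lambda>v. gradF y \<bullet> v)) (at y)" for y
  proof -
    have "((\<lambda>x. \<Sum>i<n. fs i x) has_derivative (\<lambda>v. \<Sum>i<n. grad i y \<bullet> v)) (at y)"
      by (rule has_derivative_sum) (use deriv in auto)
    hence "((\<lambda>x. (1 / real n) * (\<Sum>i<n. fs i x)) has_derivative (\<lambda>v. (1 / real n) * (\<Sum>i<n. grad i y \<bullet> v))) (at y)"
      by (rule has_derivative_mult_right)
    thus ?thesis unfolding F_def gradF_def
      by (rule has_derivative_eq_rhs) (auto simp: fun_eq_iff inner_sum_left)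
  qed
  have pw: "efbv_lyap n fs grad gamma \<theta> xstar (stepf n gamma lam nu grad (Dw w) (x, h, hb)) \<le> Q w" for w
  proof -
    have desc: "F (x' w) \<le> F x + gF \<bullet> (x' w - x) + L / 2 * (norm (x' w - x))^2"
      unfolding gF_def by (rule descent[OF dF smooth_f])
    have dx: "x' w - x = - (gamma *\<^sub>R g w)" unfolding x'_def by simp
    have desc2: "F (x' w) \<le> F x - gamma * (gF \<bullet> g w) + L / 2 * gamma^2 * (norm (g w))^2"
      using desc unfolding dx by (simp add: power_mult_distrib)
    have ident: "(norm (g w - gF))^2 = (norm (g w))^2 - 2 * (gF \<bullet> g w) + (norm gF)^2"
      unfolding power2_norm_eq_inner by (simp add: inner_diff_left inner_diff_right inner_commute)
    have per: "(norm (grad i (x' w) - (h i + lam *\<^sub>R Dx i w)))^2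
        \<le> (1 + 1/s) * ((Ls i)^2 * gamma^2 * (norm (g w))^2) + (1 + s) * (norm (v i - lam *\<^sub>R Dx i w))^2"
      if i: "i < n" for i
    proof -
      have eq: "grad i (x' w) - (h i + lam *\<^sub>R Dx i w) = (grad i (x' w) - grad i x) + (v i - lam *\<^sub>R Dx i w)"
        unfolding v_def by simp
      have "norm (grad i (x' w) - grad i x) \<le> Ls i * norm (x' w - x)" using smooth_i[OF i] .
      hence "(norm (grad i (x' w) - grad i x))^2 \<le> (Ls i * norm (x' w - x))^2"
        by (intro power_mono) auto
      also have "\<dots> = (Ls i)^2 * gamma^2 * (norm (g w))^2"
        unfolding dx using gamma_pos by (simp add: power_mult_distrib)
      finally have b1: "(norm (grad i (x' w) - grad i x))^2 \<le> (Ls i)^2 * gamma^2 * (norm (g w))^2" .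
      show ?thesis
      proof -
        have "(1 + 1/s) * (norm (grad i (x' w) - grad i x))^2 \<le> (1 + 1/s) * ((Ls i)^2 * gamma^2 * (norm (g w))^2)"
          by (rule mult_left_mono[OF b1]) (use s_pos in simp)
        hence "(norm ((grad i (x' w) - grad i x) + (v i - lam *\<^sub>R Dx i w)))^2 \<le> (1 + 1/s) * ((Ls i)^2 * gamma^2 * (norm (g w))^2) + (1 + s) * (norm (v i - lam *\<^sub>R Dx i w))^2"
          using young_sq[OF s_pos, of "grad i (x' w) - grad i x" "v i - lam *\<^sub>R Dx i w"] by linarith
        thus ?thesis unfolding eq .
      qed
    qed
    have sumb: "(1 / real n) * (\<Sum>i<n. (norm (grad i (x' w) - (h i + lam *\<^sub>R Dx i w)))^2)
        \<le> (1 + 1/s) * Lt^2 * gamma^2 * (norm (g w))^2 + (1 + s) * S w"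
    proof -
      have "(\<Sum>i<n. (norm (grad i (x' w) - (h i + lam *\<^sub>R Dx i w)))^2)
          \<le> (\<Sum>i<n. (1 + 1/s) * ((Ls i)^2 * gamma^2 * (norm (g w))^2) + (1 + s) * (norm (v i - lam *\<^sub>R Dx i w))^2)"
        by (rule sum_mono) (use per in auto)
      also have "\<dots> = (1 + 1/s) * gamma^2 * (norm (g w))^2 * (\<Sum>i<n. (Ls i)^2) + (1 + s) * (\<Sum>i<n. (norm (v i - lam *\<^sub>R Dx i w))^2)"
        by (simp add: sum.distrib sum_distrib_left sum_distrib_right sum_divide_distrib algebra_simps)
      finally have X: "(\<Sum>i<n. (norm (grad i (x' w) - (h i + lam *\<^sub>R Dx i w)))^2)
          \<le> (1 + 1/s) * gamma^2 * (norm (g w))^2 * (\<Sum>i<n. (Ls i)^2) + (1 + s) * (\<Sum>i<n. (norm (v i - lam *\<^sub>R Dx i w))^2)" .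
      have "(1 / real n) * (\<Sum>i<n. (norm (grad i (x' w) - (h i + lam *\<^sub>R Dx i w)))^2)
          \<le> (1 / real n) * ((1 + 1/s) * gamma^2 * (norm (g w))^2 * (\<Sum>i<n. (Ls i)^2) + (1 + s) * (\<Sum>i<n. (norm (v i - lam *\<^sub>R Dx i w))^2))"
        by (rule mult_left_mono[OF X]) simp
      also have "\<dots> = (1 + 1/s) * Lt^2 * gamma^2 * (norm (g w))^2 + (1 + s) * S w"
        unfolding Lt2 S_def by (simp add: algebra_simps add_divide_distrib)
      finally show ?thesis .
    qed
    have gg: "gamma / 2 * (norm (g w))^2 * (1 - L * gamma - a^2 * gamma^2) \<ge> 0"
      using key gamma_pos by simp
    have cc: "c * ((1 + 1/s) * Lt^2 * gamma^2 * (norm (g w))^2) = gamma / 2 * a^2 * gamma^2 * (norm (g w))^2"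
      using coef by (metis (no_types, lifting) mult.assoc)
    have "efbv_lyap n fs grad gamma \<theta> xstar (stepf n gamma lam nu grad (Dw w) (x, h, hb))
        \<le> F x - gamma * (gF \<bullet> g w) + L / 2 * gamma^2 * (norm (g w))^2 - F xstar
           + c * ((1 + 1/s) * Lt^2 * gamma^2 * (norm (g w))^2 + (1 + s) * S w)"
      unfolding Psi1 using desc2 sumb c_pos by (smt (verit) mult_left_mono)
    also have "\<dots> = Q w - gamma / 2 * (norm (g w))^2 * (1 - L * gamma - a^2 * gamma^2)"
    proof -
      have e: "c * ((1 + 1/s) * Lt^2 * gamma^2 * (norm (g w))^2 + (1 + s) * S w)
          = c * ((1 + 1/s) * Lt^2 * gamma^2 * (norm (g w))^2) + c * ((1 + s) * S w)" by (rule distrib_left)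
      show ?thesis unfolding e Q_def
        using arith_aux[OF cc ident, where Fx="F x" and Fs="F xstar" and L=L and c=c and Y="(1+s) * S w"]
        by (simp add: mult.assoc)
    qed
    also have "\<dots> \<le> Q w" using gg by simp
    finally show ?thesis .
  qed
  have Dx_int: "integrable M (\<lambda>w. Dx i w)" if "i < n" for i
    unfolding Dx_def using D_int[OF that] .
  have E_eq: "E i = (\<integral>w. Dx i w \<partial>M)" for i unfolding E_def ED_def Dx_def ..
  have mom1: "integrable M (\<lambda>w. (norm (v i - lam *\<^sub>R Dx i w))^2) \<and>
              (\<integral>w. (norm (v i - lam *\<^sub>R Dx i w))^2 \<partial>M) \<le> r * (norm (v i))^2" if i: "i < n" for i
  proof -
    have fe: "(\<lambda>w. (norm (v i - lam *\<^sub>R Dx i w))^2) = (\<lambda>w. (norm ((v i - lam *\<^sub>R E i) + (- lam) *\<^sub>R (Dx i w - E i)))^2)"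
      by (simp add: algebra_simps)
    have iV: "integrable M (\<lambda>w. (norm (Dx i w - E i))^2)"
      unfolding Dx_def E_def using D_var_int[OF i] .
    have V: "(\<integral>w. (norm (Dx i w - E i))^2 \<partial>M) \<le> om * (norm (v i))^2"
      unfolding Dx_def E_def using D_var[OF i] .
    note vd = var_decomp[OF prob Dx_int[OF i] iV E_eq, of "v i - lam *\<^sub>R E i" "- lam"]
    have "norm (v i - lam *\<^sub>R E i) = norm ((1 - lam) *\<^sub>R v i - lam *\<^sub>R (E i - v i))"
      by (simp add: algebra_simps)
    also have "\<dots> \<le> norm ((1 - lam) *\<^sub>R v i) + norm (lam *\<^sub>R (E i - v i))" by (rule norm_triangle_ineq4)
    also have "\<dots> = (1 - lam) * norm (v i) + lam * norm (E i - v i)" using lam_range by simp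
    also have "\<dots> \<le> (1 - lam) * norm (v i) + lam * (eta * norm (v i))"
      using D_bias[OF i, of "v i"] lam_range unfolding E_def by (intro add_left_mono mult_left_mono) auto
    finally have nb: "norm (v i - lam *\<^sub>R E i) \<le> (1 - lam + lam * eta) * norm (v i)" by (simp add: algebra_simps)
    hence nb2: "(norm (v i - lam *\<^sub>R E i))^2 \<le> ((1 - lam + lam * eta) * norm (v i))^2"
      by (intro power_mono) auto
    have V2: "lam^2 * (\<integral>w. (norm (Dx i w - E i))^2 \<partial>M) \<le> lam^2 * (om * (norm (v i))^2)"
      using V by (intro mult_left_mono) auto
    have "(\<integral>w. (norm (v i - lam *\<^sub>R Dx i w))^2 \<partial>M) \<le> ((1 - lam + lam * eta) * norm (v i))^2 + lam^2 * (om * (norm (v i))^2)"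
      unfolding fe vd(2) using nb2 V2 by simp
    also have "\<dots> = r * (norm (v i))^2" unfolding r_def efbv_r_def by (simp add: power2_eq_square algebra_simps)
    finally show ?thesis unfolding fe using vd(1) by simp
  qed
  define B where "B = (\<lambda>w. (1 / real n) *\<^sub>R (\<Sum>i<n. Dx i w))"
  define mB where "mB = (1 / real n) *\<^sub>R (\<Sum>i<n. E i)"
  define A where "A = (1 / real n) *\<^sub>R (\<Sum>i<n. nu *\<^sub>R E i - v i)"
  have gdec: "g w - gF = A + nu *\<^sub>R (B w - mB)" for w
  proof -
    have "g w - gF = (1 / real n) *\<^sub>R ((\<Sum>i<n. h i) - (\<Sum>i<n. grad i x)) + nu *\<^sub>R B w"
      unfolding g_def gF_def gradF_def hb_def B_def by (simp add: algebra_simps)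
    also have "(\<Sum>i<n. h i) - (\<Sum>i<n. grad i x) = - (\<Sum>i<n. v i)"
      unfolding v_def by (simp add: sum_subtractf)
    also have "A + nu *\<^sub>R (B w - mB) = (1 / real n) *\<^sub>R (- (\<Sum>i<n. v i)) + nu *\<^sub>R B w"
      unfolding A_def mB_def by (simp add: sum_subtractf scaleR_sum_right algebra_simps)
    finally show ?thesis by simp
  qed
  have iB0: "integrable M (\<lambda>w. \<Sum>i<n. Dx i w)" by (rule Bochner_Integration.integrable_sum) (use Dx_int in auto)
  have iB: "integrable M B" unfolding B_def using iB0 by (rule integrable_scaleR_right)
  have mB_eq: "mB = (\<integral>w. B w \<partial>M)"
    unfolding B_def mB_def E_eq using Dx_int by (simp add: Bochner_Integration.integral_sum)
  have BmB: "B w - mB = (1 / real n) *\<^sub>R (\<Sum>i<n. Dx i w - E i)" for w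
    unfolding B_def mB_def by (simp add: sum_subtractf algebra_simps)
  have iVB: "integrable M (\<lambda>w. (norm (B w - mB))^2)"
  proof (rule Bochner_Integration.integrable_bound)
    show "integrable M (\<lambda>w. (1 / real n) * (\<Sum>i<n. (norm (Dx i w - E i))^2))"
    proof -
      have "integrable M (\<lambda>w. \<Sum>i<n. (norm (Dx i w - E i))^2)"
        by (rule Bochner_Integration.integrable_sum) (use D_var_int in \<open>auto simp: Dx_def E_def\<close>)
      thus ?thesis by (rule integrable_mult_right)
    qed
    have "(\<lambda>w. B w - mB) \<in> borel_measurable M" using iB by auto
    thus "(\<lambda>w. (norm (B w - mB))^2) \<in> borel_measurable M" by measurable
    show "AE w in M. norm ((norm (B w - mB))^2) \<le> norm ((1 / real n) * (\<Sum>i<n. (norm (Dx i w - E i))^2))"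
      unfolding BmB using avg_norm_sq[OF n_pos] by (auto intro!: AE_I2 simp: sum_nonneg)
  qed
  have VB: "(\<integral>w. (norm (B w - mB))^2 \<partial>M) \<le> om_av * G"
  proof -
    have "(\<integral>w. (norm (B w - mB))^2 \<partial>M) \<le> om_av / real n * (\<Sum>i<n. (norm (v i))^2)"
      unfolding BmB Dx_def E_def using D_av[of v] .
    thus ?thesis unfolding G_def by simp
  qed
  have mom2: "integrable M (\<lambda>w. (norm (g w - gF))^2) \<and> (\<integral>w. (norm (g w - gF))^2 \<partial>M) \<le> rav * G"
  proof -
    note vd = var_decomp[OF prob iB iVB mB_eq, of A nu]
    have Ab: "(norm A)^2 \<le> (1 - nu + nu * eta)^2 * G"
    proof -
      have "(norm A)^2 \<le> (1 / real n) * (\<Sum>i<n. (norm (nu *\<^sub>R E i - v i))^2)"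
        unfolding A_def by (rule avg_norm_sq[OF n_pos])
      also have "\<dots> \<le> (1 / real n) * (\<Sum>i<n. (1 - nu + nu * eta)^2 * (norm (v i))^2)"
      proof (intro mult_left_mono sum_mono)
        fix i assume "i \<in> {..<n}" hence i: "i < n" by simp
        have "norm (nu *\<^sub>R E i - v i) = norm (nu *\<^sub>R (E i - v i) - (1 - nu) *\<^sub>R v i)"
          by (simp add: algebra_simps)
        also have "\<dots> \<le> norm (nu *\<^sub>R (E i - v i)) + norm ((1 - nu) *\<^sub>R v i)" by (rule norm_triangle_ineq4)
        also have "\<dots> = nu * norm (E i - v i) + (1 - nu) * norm (v i)" using nu_range by simp
        also have "\<dots> \<le> nu * (eta * norm (v i)) + (1 - nu) * norm (v i)"
          using D_bias[OF i, of "v i"] nu_range unfolding E_def by (intro add_right_mono mult_left_mono) auto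
        finally have "norm (nu *\<^sub>R E i - v i) \<le> (1 - nu + nu * eta) * norm (v i)" by (simp add: algebra_simps)
        hence "(norm (nu *\<^sub>R E i - v i))^2 \<le> ((1 - nu + nu * eta) * norm (v i))^2"
          by (intro power_mono) auto
        thus "(norm (nu *\<^sub>R E i - v i))^2 \<le> (1 - nu + nu * eta)^2 * (norm (v i))^2"
          by (simp add: power_mult_distrib)
      qed simp
      also have "\<dots> = (1 - nu + nu * eta)^2 * G" unfolding G_def by (simp add: sum_distrib_left)
      finally show ?thesis .
    qed
    have "(\<integral>w. (norm (g w - gF))^2 \<partial>M) = (norm A)^2 + nu^2 * (\<integral>w. (norm (B w - mB))^2 \<partial>M)"
      unfolding gdec by (rule vd(2))
    also have "\<dots> \<le> (1 - nu + nu * eta)^2 * G + nu^2 * (om_av * G)"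
      using Ab VB by (intro add_mono mult_left_mono) auto
    also have "\<dots> = rav * G" unfolding rav_def efbv_r_def by (simp add: algebra_simps)
    finally show ?thesis unfolding gdec using vd(1) by simp
  qed
  have iS0: "integrable M (\<lambda>w. \<Sum>i<n. (norm (v i - lam *\<^sub>R Dx i w))^2)"
    by (rule Bochner_Integration.integrable_sum) (use mom1 in auto)
  have iS: "integrable M S" unfolding S_def using iS0 by (rule integrable_mult_right)
  have intS: "(\<integral>w. S w \<partial>M) \<le> r * G"
  proof -
    have "(\<integral>w. S w \<partial>M) = (1 / real n) * (\<Sum>i<n. \<integral>w. (norm (v i - lam *\<^sub>R Dx i w))^2 \<partial>M)"
      unfolding S_def using mom1 by (simp add: Bochner_Integration.integral_sum)
    also have "\<dots> \<le> (1 / real n) * (\<Sum>i<n. r * (norm (v i))^2)"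
      by (intro mult_left_mono sum_mono) (use mom1 in auto)
    also have "\<dots> = r * G" unfolding G_def by (simp add: sum_distrib_left)
    finally show ?thesis .
  qed
  have i2: "integrable M (\<lambda>w. (norm (g w - gF))^2)" using mom2 by simp
  have iQ: "integrable M Q" unfolding Q_def using iS i2 by auto
  have intQ: "(\<integral>w. Q w \<partial>M) = F x - F xstar - gamma / 2 * (norm gF)^2
        + gamma / 2 * (\<integral>w. (norm (g w - gF))^2 \<partial>M) + c * (1 + s) * (\<integral>w. S w \<partial>M)"
    unfolding Q_def using iS i2 by (simp add: Bochner_Integration.integral_add Bochner_Integration.integral_diff P.prob_space)
  have G_nn: "G \<ge> 0" unfolding G_def by (simp add: sum_nonneg)
  have Fd_nn: "F x - F xstar \<ge> 0" using xstar_min[of x] by simp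
  have PL': "gamma / 2 * (norm gF)^2 \<ge> gamma * mu * (F x - F xstar)"
  proof -
    have "gamma / 2 * (2 * mu * (F x - F xstar)) \<le> gamma / 2 * (norm gF)^2"
      using PL[of x] gamma_pos unfolding gF_def by (intro mult_left_mono) auto
    thus ?thesis by (simp add: algebra_simps)
  qed
  have t1: "gamma / 2 * (\<integral>w. (norm (g w - gF))^2 \<partial>M) \<le> gamma / 2 * (rav * G)"
    using mom2 gamma_pos by (intro mult_left_mono) auto
  have t2: "c * (1 + s) * (\<integral>w. S w \<partial>M) \<le> c * (1 + s) * (r * G)"
    using intS c_pos s_pos by (intro mult_left_mono) auto
  have coefG: "gamma / 2 * (rav * G) + c * (1 + s) * (r * G) = (r + 1) / 2 * (c * G)"
  proof -
    have "gamma / 2 * rav = c * (\<theta> * rav)" unfolding c_def using th_pos by simp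
    also have "\<dots> = c * (s * (1 + s) * r)" by (simp add: th_rav)
    finally have e1: "gamma / 2 * rav = c * (s * (1 + s) * r)" .
    have "gamma / 2 * (rav * G) + c * (1 + s) * (r * G) = (gamma / 2 * rav) * G + c * (1 + s) * (r * G)"
      by simp
    also have "\<dots> = c * G * ((1 + s)^2 * r)" unfolding e1 by (simp add: algebra_simps power2_eq_square)
    also have "\<dots> = (r + 1) / 2 * (c * G)" unfolding s_sq using r_pos by (simp add: field_simps)
    finally show ?thesis .
  qed
  have bound: "(\<integral>w. Q w \<partial>M) \<le> \<rho> * (F x - F xstar + c * G)"
  proof -
    have "(\<integral>w. Q w \<partial>M) \<le> F x - F xstar - gamma * mu * (F x - F xstar) + (r + 1) / 2 * (c * G)"
      unfolding intQ using PL' t1 t2 coefG by linarith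
    also have "\<dots> = (1 - gamma * mu) * (F x - F xstar) + (r + 1) / 2 * (c * G)" by (simp add: algebra_simps)
    also have "\<dots> \<le> \<rho> * (F x - F xstar) + \<rho> * (c * G)"
      unfolding \<rho>_def using Fd_nn G_nn c_pos
      by (intro add_mono mult_right_mono) (auto intro: mult_nonneg_nonneg)
    finally show ?thesis by (simp add: algebra_simps)
  qed
  have Psi1_nn: "efbv_lyap n fs grad gamma \<theta> xstar (stepf n gamma lam nu grad (Dw w) (x, h, hb)) \<ge> 0" for w
    unfolding Psi1 using xstar_min[of "x' w"] c_pos by (intro add_nonneg_nonneg mult_nonneg_nonneg sum_nonneg) auto
  have "(\<integral>\<^sup>+w. ennreal (efbv_lyap n fs grad gamma \<theta> xstar (stepf n gamma lam nu grad (Dw w) (x, h, hb))) \<partial>M)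
      \<le> (\<integral>\<^sup>+w. ennreal (Q w) \<partial>M)"
    by (intro nn_integral_mono ennreal_leI pw)
  also have "\<dots> = ennreal (\<integral>w. Q w \<partial>M)"
    by (rule nn_integral_eq_integral[OF iQ]) (use pw Psi1_nn in \<open>auto intro: order_trans\<close>)
  also have "\<dots> \<le> ennreal (\<rho> * efbv_lyap n fs grad gamma \<theta> xstar (x, h, hb))"
    unfolding Psi0 using bound by (rule ennreal_leI)
  finally show ?thesis unfolding \<rho>_def \<theta>_def hb_def .
qed



definition smeas :: "nat \<Rightarrow> 'm measure \<Rightarrow> ('m \<Rightarrow> 'a::euclidean_space \<times> (nat \<Rightarrow> 'a) \<times> 'a) \<Rightarrow> bool" where
  "smeas n \<Omega> S \<longleftrightarrow> (\<lambda>w. fst (S w)) \<in> borel_measurable \<Omega> \<and>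
     (\<forall>i<n. (\<lambda>w. fst (snd (S w)) i) \<in> borel_measurable \<Omega>) \<and> (\<lambda>w. snd (snd (S w))) \<in> borel_measurable \<Omega>"

lemma stepf_alt: "stepf n gamma lam nu grad D st =
   (fst st - gamma *\<^sub>R (snd (snd st) + nu *\<^sub>R ((1 / real n) *\<^sub>R (\<Sum>i<n. D i (grad i (fst st) - fst (snd st) i)))),
    (\<lambda>i. fst (snd st) i + lam *\<^sub>R D i (grad i (fst st) - fst (snd st) i)),
    snd (snd st) + lam *\<^sub>R ((1 / real n) *\<^sub>R (\<Sum>i<n. D i (grad i (fst st) - fst (snd st) i))))"
  by (cases st) (simp add: stepf_def Let_def)

lemma lyap_alt: "efbv_lyap n fs grad gamma theta xstar st =
     (1 / real n) * (\<Sum>i<n. fs i (fst st)) - (1 / real n) * (\<Sum>i<n. fs i xstar)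
     + gamma / (2 * theta) * ((1 / real n) * (\<Sum>i<n. (norm (grad i (fst st) - fst (snd st) i))^2))"
  by (cases st) (simp add: efbv_lyap_def)

lemma smeas_const: "smeas n \<Omega> (\<lambda>w. st)" unfolding smeas_def by simp

lemma smeas_step:
  fixes C :: "nat \<Rightarrow> 'a::euclidean_space \<Rightarrow> 'b \<Rightarrow> 'a"
  assumes S: "smeas n \<Omega> S" and Y: "Y \<in> \<Omega> \<rightarrow>\<^sub>M N"
    and Cm: "\<And>i. (\<lambda>(x, b). C i x b) \<in> borel \<Otimes>\<^sub>M N \<rightarrow>\<^sub>M borel"
    and gm: "\<And>i. i < n \<Longrightarrow> grad i \<in> borel_measurable borel"
  shows "smeas n \<Omega> (\<lambda>w. stepf n gamma lam nu grad (\<lambda>i v. C i v (Y w)) (S w))"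
proof -
  have X: "(\<lambda>w. fst (S w)) \<in> borel_measurable \<Omega>" and H: "\<And>i. i < n \<Longrightarrow> (\<lambda>w. fst (snd (S w)) i) \<in> borel_measurable \<Omega>"
    and HB: "(\<lambda>w. snd (snd (S w))) \<in> borel_measurable \<Omega>" using S unfolding smeas_def by auto
  have d: "(\<lambda>w. C i (grad i (fst (S w)) - fst (snd (S w)) i) (Y w)) \<in> borel_measurable \<Omega>" if i: "i < n" for i
  proof -
    have g1: "(\<lambda>w. grad i (fst (S w))) \<in> borel_measurable \<Omega>" by (rule measurable_compose[OF X gm[OF i]])
    have "(\<lambda>w. (grad i (fst (S w)) - fst (snd (S w)) i, Y w)) \<in> \<Omega> \<rightarrow>\<^sub>M borel \<Otimes>\<^sub>M N"
      by (intro measurable_Pair borel_measurable_diff g1 H[OF i] Y)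
    from measurable_compose[OF this Cm[of i]] show ?thesis by simp
  qed
  have sm: "(\<lambda>w. \<Sum>i<n. C i (grad i (fst (S w)) - fst (snd (S w)) i) (Y w)) \<in> borel_measurable \<Omega>"
    by (rule borel_measurable_sum) (use d in auto)
  show ?thesis unfolding smeas_def stepf_alt using X H HB sm d
    by (auto intro!: borel_measurable_add borel_measurable_diff borel_measurable_scaleR)
qed

lemma smeas_lyap:
  assumes S: "smeas n \<Omega> S" and fm: "\<And>i. i < n \<Longrightarrow> fs i \<in> borel_measurable borel"
    and gm: "\<And>i. i < n \<Longrightarrow> grad i \<in> borel_measurable borel"
  shows "(\<lambda>w. efbv_lyap n fs grad gamma theta xstar (S w)) \<in> borel_measurable \<Omega>"
proof -
  have X: "(\<lambda>w. fst (S w)) \<in> borel_measurable \<Omega>" and H: "\<And>i. i < n \<Longrightarrow> (\<lambda>w. fst (snd (S w)) i) \<in> borel_measurable \<Omega>"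
    using S unfolding smeas_def by auto
  have a: "(\<lambda>w. \<Sum>i<n. fs i (fst (S w))) \<in> borel_measurable \<Omega>"
    by (rule borel_measurable_sum) (use measurable_compose[OF X fm] in auto)
  have b: "(\<lambda>w. \<Sum>i<n. (norm (grad i (fst (S w)) - fst (snd (S w)) i))^2) \<in> borel_measurable \<Omega>"
  proof (rule borel_measurable_sum)
    fix i assume "i \<in> {..<n}" hence i: "i < n" by simp
    have "(\<lambda>w. grad i (fst (S w)) - fst (snd (S w)) i) \<in> borel_measurable \<Omega>"
      by (intro borel_measurable_diff measurable_compose[OF X gm[OF i]] H[OF i])
    thus "(\<lambda>w. (norm (grad i (fst (S w)) - fst (snd (S w)) i))^2) \<in> borel_measurable \<Omega>" by measurable
  qed
  show ?thesis unfolding lyap_alt using a b by measurable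
qed

lemma efbv_cong: "(\<And>s. s < t \<Longrightarrow> Cr s = Cr' s) \<Longrightarrow>
   efbv n gamma lam nu grad Cr x0 h0 t = efbv n gamma lam nu grad Cr' x0 h0 t"
  by (induction t) (simp_all add: efbv_Suc')

lemma efbv_inv: "snd (snd (efbv n gamma lam nu grad Cr x0 h0 t)) = (1 / real n) *\<^sub>R (\<Sum>i<n. fst (snd (efbv n gamma lam nu grad Cr x0 h0 t)) i)"
proof (induction t)
  case 0 show ?case by simp
next
  case (Suc t)
  show ?case unfolding efbv_Suc' stepf_alt using Suc
    by (simp add: sum.distrib scaleR_add_right scaleR_sum_right)
qed



theorem theorem1:
  fixes n :: nat
    and fs :: "nat \<Rightarrow> 'a::euclidean_space \<Rightarrow> real"
    and grad :: "nat \<Rightarrow> 'a \<Rightarrow> 'a"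
    and Ls :: "nat \<Rightarrow> real" and L :: real and mu :: real
    and xstar :: 'a
    and M :: "'w measure" and N :: "'b measure"
    and xi :: "nat \<Rightarrow> 'w \<Rightarrow> 'b"
    and C :: "nat \<Rightarrow> nat \<Rightarrow> 'a \<Rightarrow> 'b \<Rightarrow> 'a"
    and eta om om_av gamma lam nu :: real
    and x0 :: 'a and h0 :: "nat \<Rightarrow> 'a"
  defines "F \<equiv> (\<lambda>x. (1 / real n) * (\<Sum>i<n. fs i x))"
    and "gradF \<equiv> (\<lambda>x. (1 / real n) *\<^sub>R (\<Sum>i<n. grad i x))"
    and "Lt \<equiv> sqrt ((1 / real n) * (\<Sum>i<n. (Ls i)^2))"
    and "r \<equiv> efbv_r lam eta om"
    and "rav \<equiv> efbv_r nu eta om_av"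
    and "EC \<equiv> (\<lambda>i t x. \<integral>w. C i t x (xi t w) \<partial>M)"
  assumes n_pos: "n \<ge> 1"
    \<comment> \<open>each f_i convex, differentiable with gradient grad i, and L_i-smooth\<close>
    and convex: "\<And>i. i < n \<Longrightarrow> convex_on UNIV (fs i)"
    and deriv: "\<And>i x. i < n \<Longrightarrow> (fs i has_derivative (\<lambda>v. grad i x \<bullet> v)) (at x)"
    and smooth_i: "\<And>i x y. i < n \<Longrightarrow> norm (grad i x - grad i y) \<le> Ls i * norm (x - y)"
    \<comment> \<open>f is L-smooth with L <= Ltilde\<close>
    and smooth_f: "\<And>x y. norm (gradF x - gradF y) \<le> L * norm (x - y)"
    and L_le: "L \<le> Lt"
    \<comment> \<open>x* minimizer of f, PL condition\<close>
    and xstar_min: "\<And>x. F xstar \<le> F x"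
    and mu_pos: "mu > 0"
    and PL: "\<And>x. (norm (gradF x))^2 \<ge> 2 * mu * (F x - F xstar)"
    \<comment> \<open>randomness: independent per-iteration seeds xi t; C_i^t(x) = C i t x (xi t)\<close>
    and prob: "prob_space M"
    and xi_meas: "\<And>t. xi t \<in> M \<rightarrow>\<^sub>M N"
    and xi_indep: "prob_space.indep_vars M (\<lambda>_. N) xi UNIV"
    and C_meas: "\<And>i t. (\<lambda>(x, b). C i t x b) \<in> borel \<Otimes>\<^sub>M N \<rightarrow>\<^sub>M borel"
    \<comment> \<open>compressor class C(eta, omega)\<close>
    and eta_range: "0 \<le> eta" "eta < 1"
    and om_nonneg: "0 \<le> om"
    and C_int: "\<And>i t x. i < n \<Longrightarrow> integrable M (\<lambda>w. C i t x (xi t w))"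
    and C_bias: "\<And>i t x. i < n \<Longrightarrow> norm (EC i t x - x) \<le> eta * norm x"
    and C_var_int: "\<And>i t x. i < n \<Longrightarrow>
                      integrable M (\<lambda>w. (norm (C i t x (xi t w) - EC i t x))^2)"
    and C_var: "\<And>i t x. i < n \<Longrightarrow>
                  (\<integral>w. (norm (C i t x (xi t w) - EC i t x))^2 \<partial>M) \<le> om * (norm x)^2"
    and om_av_range: "0 \<le> om_av" "om_av \<le> om"
    and C_av: "\<And>t (xs :: nat \<Rightarrow> 'a).
                 (\<integral>w. (norm ((1 / real n) *\<^sub>R (\<Sum>i<n. C i t (xs i) (xi t w) - EC i t (xs i))))^2 \<partial>M)
                   \<le> om_av / real n * (\<Sum>i<n. (norm (xs i))^2)"
    \<comment> \<open>step-size parameters\<close>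
    and r_pos: "r > 0" and rav_pos: "rav > 0"
    and nu_range: "0 < nu" "nu \<le> 1"
    and lam_range: "0 < lam" "lam \<le> 1"
    and r_lt1: "r < 1"
    and gamma_pos: "0 < gamma"
    and gamma_le: "gamma \<le> 1 / (L + Lt * sqrt (rav / r) * (1 / s_star r))"
  shows "\<forall>t. (\<integral>\<^sup>+ w. ennreal (efbv_lyap n fs grad gamma (theta_star r rav) xstar
                     (efbv n gamma lam nu grad (\<lambda>t i x. C i t x (xi t w)) x0 h0 t)) \<partial>M)
             \<le> ennreal ((max (1 - gamma * mu) ((r + 1) / 2)) ^ t *
                 efbv_lyap n fs grad gamma (theta_star r rav) xstar
                   (x0, h0, (1 / real n) *\<^sub>R (\<Sum>i<n. h0 i)))"
proof -
  interpret P: prob_space M by (rule prob)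
  define \<theta> where "\<theta> = theta_star r rav"
  define \<rho> where "\<rho> = max (1 - gamma * mu) ((r + 1) / 2)"
  define Psi where "Psi = efbv_lyap n fs grad gamma \<theta> xstar"
  define Sx where "Sx = (\<lambda>t w. efbv n gamma lam nu grad (\<lambda>t i x. C i t x (xi t w)) x0 h0 t)"
  define Gt where "Gt = (\<lambda>t (ys :: nat \<Rightarrow> 'b). efbv n gamma lam nu grad (\<lambda>t i x. C i t x (ys t)) x0 h0 t)"
  define X where "X = (\<lambda>t w. \<lambda>i\<in>{..<t}. xi i w)"
  have rho_nn: "\<rho> \<ge> 0" unfolding \<rho>_def using r_pos by (simp add: le_max_iff_disj)
  have GX: "Gt t (X t w) = Sx t w" for t w
    unfolding Gt_def Sx_def X_def by (rule efbv_cong) auto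
  obtain b :: 'a where b: "b \<in> Basis" using nonempty_Basis by blast
  have gm: "grad i \<in> borel_measurable borel" if i: "i < n" for i
  proof -
    have "Ls i \<ge> 0"
    proof -
      have "0 \<le> norm (grad i b - grad i 0)" by simp
      also have "\<dots> \<le> Ls i * norm (b - 0)" by (rule smooth_i[OF i])
      finally show ?thesis using b by simp
    qed
    hence "(Ls i)-lipschitz_on UNIV (grad i)"
      by (intro lipschitz_onI) (use smooth_i[OF i] in \<open>auto simp: dist_norm\<close>)
    hence "continuous_on UNIV (grad i)" by (rule lipschitz_on_continuous_on)
    thus ?thesis by (rule borel_measurable_continuous_onI)
  qed
  have fm: "fs i \<in> borel_measurable borel" if i: "i < n" for i
  proof -
    have "continuous_on UNIV (fs i)"
      by (intro continuous_at_imp_continuous_on ballI has_derivative_continuous[OF deriv[OF i]])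
    thus ?thesis by (rule borel_measurable_continuous_onI)
  qed
  have Gmeas: "t \<le> T \<Longrightarrow> smeas n (PiM {..<T} (\<lambda>_. N)) (Gt t)" for t T
  proof (induction t)
    case 0 show ?case unfolding Gt_def by (simp add: smeas_const)
  next
    case (Suc t)
    have e: "Gt (Suc t) = (\<lambda>ys. stepf n gamma lam nu grad (\<lambda>i v. C i t v (ys t)) (Gt t ys))"
      unfolding Gt_def by (simp only: efbv_Suc')
    have "(\<lambda>ys. ys t) \<in> PiM {..<T} (\<lambda>_. N) \<rightarrow>\<^sub>M N"
      using Suc.prems by (intro measurable_component_singleton) simp
    thus ?case unfolding e using Suc by (intro smeas_step[OF _ _ C_meas gm]) auto
  qed
  have Xm: "X t \<in> M \<rightarrow>\<^sub>M PiM {..<t} (\<lambda>_. N)" for t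
    unfolding X_def by (intro measurable_restrict xi_meas)
  have step: "(\<integral>\<^sup>+w. ennreal (Psi (Sx (Suc t) w)) \<partial>M) \<le> ennreal \<rho> * (\<integral>\<^sup>+w. ennreal (Psi (Sx t w)) \<partial>M)" for t
  proof -
    let ?PM = "PiM {..<t} (\<lambda>_. N)"
    define f where "f = (\<lambda>p :: (nat \<Rightarrow> 'b) \<times> 'b. ennreal (Psi (stepf n gamma lam nu grad (\<lambda>i v. C i t v (snd p)) (Gt t (fst p)))))"
    have Sx_Suc: "Sx (Suc t) w = stepf n gamma lam nu grad (\<lambda>i v. C i t v (xi t w)) (Sx t w)" for w
      unfolding Sx_def by (simp only: efbv_Suc')
    have sm1: "smeas n (?PM \<Otimes>\<^sub>M N) (\<lambda>p. Gt t (fst p))"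
      using Gmeas[of t t] unfolding smeas_def by (auto intro: measurable_compose[OF measurable_fst])
    have sm2: "smeas n (?PM \<Otimes>\<^sub>M N) (\<lambda>p. stepf n gamma lam nu grad (\<lambda>i v. C i t v (snd p)) (Gt t (fst p)))"
      by (rule smeas_step[OF sm1 measurable_snd C_meas gm])
    have fmeas: "f \<in> borel_measurable (?PM \<Otimes>\<^sub>M N)"
      unfolding f_def Psi_def using smeas_lyap[OF sm2 fm gm] by measurable
    have Psim: "(\<lambda>y. ennreal (Psi (Gt t y))) \<in> borel_measurable ?PM"
      unfolding Psi_def using smeas_lyap[OF Gmeas[of t t] fm gm] by measurable
    have ind0: "P.indep_vars (\<lambda>j. PiM (case_bool {..<t} {t} j) (\<lambda>_. N)) (\<lambda>j \<omega>. restrict (\<lambda>i. xi i \<omega>) (case_bool {..<t} {t} j)) UNIV"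
      by (rule P.indep_vars_restrict[OF xi_indep]) (auto simp: disjoint_family_on_def split: bool.split)
    have e1: "(\<lambda>j. PiM (case_bool {..<t} {t} j) (\<lambda>_. N)) = case_bool ?PM (PiM {t} (\<lambda>_. N))"
      by (rule ext) (simp split: bool.split)
    have e2: "(\<lambda>j \<omega>. restrict (\<lambda>i. xi i \<omega>) (case_bool {..<t} {t} j)) = case_bool (X t) (\<lambda>\<omega>. restrict (\<lambda>i. xi i \<omega>) {t})"
      unfolding X_def by (rule ext) (simp split: bool.split)
    have ind1: "P.indep_var ?PM (X t) (PiM {t} (\<lambda>_. N)) (\<lambda>\<omega>. restrict (\<lambda>i. xi i \<omega>) {t})"
      using ind0 unfolding e1 e2 P.indep_var_def .
    define Y where "Y = (\<lambda>\<omega>. restrict (\<lambda>i. xi i \<omega>) {t})"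
    let ?PT = "PiM {t} (\<lambda>_. N)"
    define f' where "f' = (\<lambda>p :: (nat \<Rightarrow> 'b) \<times> (nat \<Rightarrow> 'b). f (fst p, snd p t))"
    have Ym: "Y \<in> M \<rightarrow>\<^sub>M ?PT" unfolding Y_def by (intro measurable_restrict xi_meas)
    have ind: "P.indep_var ?PM (X t) ?PT Y" using ind1 unfolding Y_def .
    have dist: "distr M (?PM \<Otimes>\<^sub>M ?PT) (\<lambda>w. (X t w, Y w)) = distr M ?PM (X t) \<Otimes>\<^sub>M distr M ?PT Y"
      using ind unfolding P.indep_var_distribution_eq by simp
    interpret Q: prob_space "distr M ?PT Y" by (rule P.prob_space_distr[OF Ym])
    have f'meas: "f' \<in> borel_measurable (?PM \<Otimes>\<^sub>M ?PT)"
    proof -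
      have "(\<lambda>p :: (nat \<Rightarrow> 'b) \<times> (nat \<Rightarrow> 'b). (fst p, snd p t)) \<in> ?PM \<Otimes>\<^sub>M ?PT \<rightarrow>\<^sub>M ?PM \<Otimes>\<^sub>M N"
        by (intro measurable_Pair measurable_fst measurable_compose[OF measurable_snd] measurable_component_singleton) simp
      from measurable_compose[OF this fmeas] show ?thesis unfolding f'_def by simp
    qed
    have fmeas': "f' \<in> borel_measurable (distr M ?PM (X t) \<Otimes>\<^sub>M distr M ?PT Y)"
      using f'meas by (simp add: measurable_cong_sets[OF sets_pair_measure_cong[OF sets_distr sets_distr] refl])
    have inner: "(\<integral>\<^sup>+z. f' (y, z) \<partial>distr M ?PT Y) \<le> ennreal \<rho> * ennreal (Psi (Gt t y))"
      if y: "y \<in> space ?PM" for y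
    proof -
      have "(\<lambda>z. f' (y, z)) \<in> borel_measurable ?PT"
        using measurable_compose[OF measurable_Pair1'[OF y] f'meas] by simp
      hence "(\<integral>\<^sup>+z. f' (y, z) \<partial>distr M ?PT Y) = (\<integral>\<^sup>+w. f' (y, Y w) \<partial>M)"
        by (intro nn_integral_distr[OF Ym]) (simp add: measurable_distr_eq1)
      also have "\<dots> = (\<integral>\<^sup>+w. f (y, xi t w) \<partial>M)" unfolding f'_def Y_def by simp
      also have "\<dots> \<le> ennreal (\<rho> * Psi (Gt t y))"
      proof -
        define st where "st = Gt t y"
        have inv: "snd (snd st) = (1 / real n) *\<^sub>R (\<Sum>i<n. fst (snd st) i)"
          unfolding st_def Gt_def by (rule efbv_inv)
        have st_eq: "st = (fst st, fst (snd st), (1 / real n) *\<^sub>R (\<Sum>i<n. fst (snd st) i))"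
          using inv by (metis prod.collapse)
        have "(\<integral>\<^sup>+w. ennreal (efbv_lyap n fs grad gamma (theta_star r rav) xstar
            (stepf n gamma lam nu grad ((\<lambda>w i v. C i t v (xi t w)) w) (fst st, fst (snd st), (1 / real n) *\<^sub>R (\<Sum>i<n. fst (snd st) i)))) \<partial>M)
         \<le> ennreal (max (1 - gamma * mu) ((r + 1) / 2) *
              efbv_lyap n fs grad gamma (theta_star r rav) xstar (fst st, fst (snd st), (1 / real n) *\<^sub>R (\<Sum>i<n. fst (snd st) i)))"
        proof -
          have sf: "\<And>x y. norm ((1 / real n) *\<^sub>R (\<Sum>i<n. grad i x) - (1 / real n) *\<^sub>R (\<Sum>i<n. grad i y)) \<le> L * norm (x - y)"
            using smooth_f unfolding gradF_def .
          have xm: "\<And>x. (1 / real n) * (\<Sum>i<n. fs i xstar) \<le> (1 / real n) * (\<Sum>i<n. fs i x)"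
            using xstar_min unfolding F_def .
          have pl: "\<And>x. 2 * mu * ((1 / real n) * (\<Sum>i<n. fs i x) - (1 / real n) * (\<Sum>i<n. fs i xstar)) \<le> (norm ((1 / real n) *\<^sub>R (\<Sum>i<n. grad i x)))^2"
            using PL unfolding F_def gradF_def .
          have ci: "\<And>i v. i < n \<Longrightarrow> integrable M (\<lambda>w. C i t v (xi t w))" using C_int by blast
          have cb: "\<And>i v. i < n \<Longrightarrow> norm ((\<integral>w. C i t v (xi t w) \<partial>M) - v) \<le> eta * norm v"
            using C_bias unfolding EC_def by blast
          have cvi: "\<And>i v. i < n \<Longrightarrow> integrable M (\<lambda>w. (norm (C i t v (xi t w) - (\<integral>w. C i t v (xi t w) \<partial>M)))^2)"
            using C_var_int unfolding EC_def by blast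
          have cv: "\<And>i v. i < n \<Longrightarrow> (\<integral>w. (norm (C i t v (xi t w) - (\<integral>w. C i t v (xi t w) \<partial>M)))^2 \<partial>M) \<le> om * (norm v)^2"
            using C_var unfolding EC_def by blast
          have ca: "\<And>xs :: nat \<Rightarrow> 'a. (\<integral>w. (norm ((1 / real n) *\<^sub>R (\<Sum>i<n. C i t (xs i) (xi t w) - (\<integral>w. C i t (xs i) (xi t w) \<partial>M))))^2 \<partial>M)
                   \<le> om_av / real n * (\<Sum>i<n. (norm (xs i))^2)"
            using C_av unfolding EC_def by blast
          have rp: "efbv_r lam eta om > 0" using r_pos unfolding r_def .
          have rap: "efbv_r nu eta om_av > 0" using rav_pos unfolding rav_def .
          have rl: "efbv_r lam eta om < 1" using r_lt1 unfolding r_def .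
          have gl: "gamma \<le> 1 / (L + sqrt ((1 / real n) * (\<Sum>i<n. (Ls i)^2)) * sqrt (efbv_r nu eta om_av / efbv_r lam eta om) * (1 / s_star (efbv_r lam eta om)))"
            using gamma_le unfolding Lt_def r_def rav_def .
          show ?thesis unfolding r_def rav_def
            by (rule one_step[where Dw="\<lambda>w i v. C i t v (xi t w)", OF n_pos deriv smooth_i sf xm pl prob eta_range om_nonneg ci cb cvi cv om_av_range(1) ca rp rap nu_range lam_range rl gamma_pos gl])
        qed
        thus ?thesis using st_eq[symmetric] unfolding f_def Psi_def \<rho>_def \<theta>_def st_def by simp
      qed
      also have "\<dots> = ennreal \<rho> * ennreal (Psi (Gt t y))" using rho_nn by (rule ennreal_mult')
      finally show ?thesis .
    qed
    have "(\<integral>\<^sup>+w. ennreal (Psi (Sx (Suc t) w)) \<partial>M) = (\<integral>\<^sup>+w. f' (X t w, Y w) \<partial>M)"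
      unfolding f'_def f_def Sx_Suc Y_def by (simp add: GX)
    also have "\<dots> = (\<integral>\<^sup>+p. f' p \<partial>distr M (?PM \<Otimes>\<^sub>M ?PT) (\<lambda>w. (X t w, Y w)))"
      using Xm Ym f'meas by (intro nn_integral_distr[symmetric]) (auto simp: measurable_distr_eq1)
    also have "\<dots> = (\<integral>\<^sup>+p. f' p \<partial>(distr M ?PM (X t) \<Otimes>\<^sub>M distr M ?PT Y))" unfolding dist ..
    also have "\<dots> = (\<integral>\<^sup>+y. \<integral>\<^sup>+z. f' (y, z) \<partial>distr M ?PT Y \<partial>distr M ?PM (X t))"
      by (rule Q.nn_integral_fst[symmetric, OF fmeas'])
    also have "\<dots> \<le> (\<integral>\<^sup>+y. ennreal \<rho> * ennreal (Psi (Gt t y)) \<partial>distr M ?PM (X t))"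
      by (rule nn_integral_mono) (use inner in simp)
    also have "\<dots> = ennreal \<rho> * (\<integral>\<^sup>+y. ennreal (Psi (Gt t y)) \<partial>distr M ?PM (X t))"
      by (rule nn_integral_cmult) (simp add: Psim)
    also have "(\<integral>\<^sup>+y. ennreal (Psi (Gt t y)) \<partial>distr M ?PM (X t)) = (\<integral>\<^sup>+w. ennreal (Psi (Gt t (X t w))) \<partial>M)"
      using Psim by (intro nn_integral_distr[OF Xm]) (simp add: measurable_distr_eq1)
    finally show ?thesis unfolding GX .
  qed
  have main: "(\<integral>\<^sup>+w. ennreal (Psi (Sx t w)) \<partial>M) \<le> ennreal (\<rho> ^ t * Psi (x0, h0, (1 / real n) *\<^sub>R (\<Sum>i<n. h0 i)))" for t
  proof (induction t)
    case 0
    have "(\<integral>\<^sup>+w. ennreal (Psi (Sx 0 w)) \<partial>M) = ennreal (Psi (x0, h0, (1 / real n) *\<^sub>R (\<Sum>i<n. h0 i)))"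
      unfolding Sx_def by (simp add: P.emeasure_space_1)
    thus ?case by simp
  next
    case (Suc t)
    have "(\<integral>\<^sup>+w. ennreal (Psi (Sx (Suc t) w)) \<partial>M) \<le> ennreal \<rho> * (\<integral>\<^sup>+w. ennreal (Psi (Sx t w)) \<partial>M)" by (rule step)
    also have "\<dots> \<le> ennreal \<rho> * ennreal (\<rho> ^ t * Psi (x0, h0, (1 / real n) *\<^sub>R (\<Sum>i<n. h0 i)))"
      by (rule mult_left_mono[OF Suc]) simp
    also have "\<dots> = ennreal (\<rho> ^ Suc t * Psi (x0, h0, (1 / real n) *\<^sub>R (\<Sum>i<n. h0 i)))"
      using rho_nn by (simp add: ennreal_mult'[symmetric] mult.assoc)
    finally show ?case .
  qed
  show ?thesis using main unfolding Psi_def Sx_def \<rho>_def \<theta>_def by blast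
qed

end
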